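(* The smallest number of vertices of an arithmetic sizeable graph is $36$. That is, for $n=9$ there is an arithmetic graph which is sizeable with respect to the partitions $A=A_0\sqcup A_1$, $B=B_0\sqcup B_1$, and for no $n\le 8$ is there such an arithmetic graph.
   Context: A simplicial graph $\Gamma$ is sizeable with respect to partitions $A=A_0\sqcup A_1$, $B=B_0\sqcup B_1$ if it is bipartite on $A$ and $B$, contains no cycle of length $4$, and each induced subgraph $\Gamma(A_s\sqcup B_t)$, $s,t\in\{0,1\}$, is connected. A graph is arithmetic if it is built as follows: the vertices are divided into four sets $A_0,A_1,B_0,B_1$, each of size $n$ and identified with $\mathbb{Z}/n$ (write $a_s^i$, $b_t^i$ for $i\in\mathbb{Z}/n$); there are eight numbers $h_{s,t},k_{s,t}\in\mathbb{Z}/n$ for $s,t\in\{0,1\}$; and the vertex $a_s^i$ is joined by an edge to $b_t^{i+h_{s,t}}$ and to $b_t^{i+k_{s,t}}$, for all $i,s,t$; there are no other edges. Here $A=A_0\sqcup A_1$, $B=B_0\sqcup B_1$. *)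

theory Defs
  imports Main
begin

definition simple_graph :: "'v set \<Rightarrow> ('v \<Rightarrow> 'v \<Rightarrow> bool) \<Rightarrow> bool" where
  "simple_graph V E \<longleftrightarrow> (\<forall>x y. E x y \<longrightarrow> x \<in> V \<and> y \<in> V \<and> x \<noteq> y \<and> E y x)"

definition bipartite_on :: "'v set \<Rightarrow> ('v \<Rightarrow> 'v \<Rightarrow> bool) \<Rightarrow> 'v set \<Rightarrow> 'v set \<Rightarrow> bool" where
  "bipartite_on V E A B \<longleftrightarrow> A \<inter> B = {} \<and> A \<union> B = V \<and>
     (\<forall>x y. E x y \<longrightarrow> (x \<in> A \<and> y \<in> B) \<or> (x \<in> B \<and> y \<in> A))"

definition has_4cycle :: "'v set \<Rightarrow> ('v \<Rightarrow> 'v \<Rightarrow> bool) \<Rightarrow> bool" where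
  "has_4cycle V E \<longleftrightarrow> (\<exists>a\<in>V. \<exists>b\<in>V. \<exists>c\<in>V. \<exists>d\<in>V. distinct [a, b, c, d] \<and>
       E a b \<and> E b c \<and> E c d \<and> E d a)"

definition induced_connected :: "('v \<Rightarrow> 'v \<Rightarrow> bool) \<Rightarrow> 'v set \<Rightarrow> bool" where
  "induced_connected E S \<longleftrightarrow> S \<noteq> {} \<and>
     (\<forall>x\<in>S. \<forall>y\<in>S. (x, y) \<in> {(u, w). u \<in> S \<and> w \<in> S \<and> E u w}\<^sup>*)"

definition sizeable :: "'v set \<Rightarrow> ('v \<Rightarrow> 'v \<Rightarrow> bool) \<Rightarrow> 'v set \<Rightarrow> 'v set \<Rightarrow> 'v set \<Rightarrow> 'v set \<Rightarrow> bool" where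
  "sizeable V E A0 A1 B0 B1 \<longleftrightarrow>
     simple_graph V E \<and> A0 \<inter> A1 = {} \<and> B0 \<inter> B1 = {} \<and>
     bipartite_on V E (A0 \<union> A1) (B0 \<union> B1) \<and>
     \<not> has_4cycle V E \<and>
     (\<forall>As \<in> {A0, A1}. \<forall>Bt \<in> {B0, B1}. induced_connected E (As \<union> Bt))"

text \<open>Vertices are triples (side, s, i): side False = A, True = B; s \<in> {0,1} encoded as bool
  (False = 0, True = 1); i \<in> {0..<n} represents an element of Z/n.
  So a_s^i = (False, s, i) and b_t^i = (True, t, i).
  Parameters h, k :: bool \<Rightarrow> bool \<Rightarrow> nat give h_{s,t}, k_{s,t} (taken mod n).\<close>

type_synonym avert = "bool \<times> bool \<times> nat"

definition arith_V :: "nat \<Rightarrow> avert set" where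
  "arith_V n = {(p, s, i). i < n}"

definition arith_part :: "nat \<Rightarrow> bool \<Rightarrow> bool \<Rightarrow> avert set" where
  "arith_part n p s = {(p, s, i) | i. i < n}"

definition arith_edge0 :: "nat \<Rightarrow> (bool \<Rightarrow> bool \<Rightarrow> nat) \<Rightarrow> (bool \<Rightarrow> bool \<Rightarrow> nat)
    \<Rightarrow> avert \<Rightarrow> avert \<Rightarrow> bool" where
  "arith_edge0 n h k u v \<longleftrightarrow> (\<exists>s t i. i < n \<and> u = (False, s, i) \<and>
      (v = (True, t, (i + h s t) mod n) \<or> v = (True, t, (i + k s t) mod n)))"

definition arith_adj :: "nat \<Rightarrow> (bool \<Rightarrow> bool \<Rightarrow> nat) \<Rightarrow> (bool \<Rightarrow> bool \<Rightarrow> nat)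
    \<Rightarrow> avert \<Rightarrow> avert \<Rightarrow> bool" where
  "arith_adj n h k u v \<longleftrightarrow> arith_edge0 n h k u v \<or> arith_edge0 n h k v u"

definition arith_sizeable :: "nat \<Rightarrow> (bool \<Rightarrow> bool \<Rightarrow> nat) \<Rightarrow> (bool \<Rightarrow> bool \<Rightarrow> nat) \<Rightarrow> bool" where
  "arith_sizeable n h k \<longleftrightarrow>
     sizeable (arith_V n) (arith_adj n h k)
       (arith_part n False False) (arith_part n False True)
       (arith_part n True False) (arith_part n True True)"

end

theory Submission
  imports Defs
begin


lemma adj_AB: "arith_adj n h k (False,s,i) (True,t,j) \<longleftrightarrow> i<n \<and> (j = (i + h s t) mod n \<or> j = (i + k s t) mod n)"
  by (auto simp: arith_adj_def arith_edge0_def)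
lemma adj_BA: "arith_adj n h k (True,t,j) (False,s,i) \<longleftrightarrow> i<n \<and> (j = (i + h s t) mod n \<or> j = (i + k s t) mod n)"
  by (auto simp: arith_adj_def arith_edge0_def)
lemma adj_AA: "\<not> arith_adj n h k (False,s,i) (False,s',i')"
  by (auto simp: arith_adj_def arith_edge0_def)
lemma adj_BB: "\<not> arith_adj n h k (True,s,i) (True,s',i')"
  by (auto simp: arith_adj_def arith_edge0_def)

lemma adj_int:
  assumes "i < n" "x = int (h s t) \<or> x = int (k s t)" "int j = (int i + x) mod int n"
  shows "arith_adj n h k (False,s,i) (True,t,j) \<and> arith_adj n h k (True,t,j) (False,s,i)"
proof -
  have "j = (i + h s t) mod n \<or> j = (i + k s t) mod n"
    using assms(2,3) by (metis of_nat_add of_nat_eq_iff zmod_int)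
  then show ?thesis using assms(1) by (simp add: adj_AB adj_BA)
qed

lemma cyc_suff:
  assumes n: "0 < n"
    and hx: "x = int(h s t) \<or> x = int(k s t)"
    and hy: "y = int(h s' t) \<or> y = int(k s' t)"
    and hz: "z = int (h s' t') \<or> z = int(k s' t')"
    and hw: "w = int(h s t') \<or> w = int(k s t')"
    and d: "int n dvd (x - y + z - w)"
    and ac: "s \<noteq> s' \<or> \<not> int n dvd (x - y)"
    and bd: "t \<noteq> t' \<or> \<not> int n dvd (z - y)"
  shows "has_4cycle (arith_V n) (arith_adj n h k)"
proof -
  let ?N = "int n"
  define a where "a = (False, s, 0::nat)"
  define b where "b = (True, t, nat (x mod ?N))"
  define c where "c = (False, s', nat ((x - y) mod ?N))"
  define d' where "d' = (True, t', nat ((x - y + z) mod ?N))"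
  have N: "?N > 0" using n by simp
  have ib: "int (nat (x mod ?N)) = x mod ?N" using N by simp
  have ic: "int (nat ((x - y) mod ?N)) = (x - y) mod ?N" using N by simp
  have id: "int (nat ((x - y + z) mod ?N)) = (x - y + z) mod ?N" using N by simp
  have lc: "nat ((x - y) mod ?N) < n" using N by (simp add: nat_less_iff)
  have E1: "arith_adj n h k a b"
    unfolding a_def b_def using adj_int[where i=0 and n=n and x=x and h=h and s=s and t=t and k=k and j="nat (x mod ?N)"] hx n ib by simp
  have E2: "arith_adj n h k b c"
  proof -
    have "int (nat (x mod ?N)) = (int (nat ((x - y) mod ?N)) + y) mod ?N"
      using ib ic by (simp add: mod_add_left_eq)
    then show ?thesis unfolding b_def c_def using adj_int[where i="nat ((x - y) mod ?N)" and n=n and x=y and h=h and s=s' and t=t and k=k] lc hy by blast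
  qed
  have E3: "arith_adj n h k c d'"
  proof -
    have "int (nat ((x - y + z) mod ?N)) = (int (nat ((x - y) mod ?N)) + z) mod ?N"
      using id ic by (simp add: mod_add_left_eq)
    then show ?thesis unfolding d'_def c_def using adj_int[where i="nat ((x - y) mod ?N)" and n=n and x=z and h=h and s=s' and t=t' and k=k] lc hz by blast
  qed
  have E4: "arith_adj n h k d' a"
  proof -
    have "(x - y + z) mod ?N = w mod ?N" using d by (simp add: mod_eq_dvd_iff)
    then have "int (nat ((x - y + z) mod ?N)) = (int 0 + w) mod ?N" using id by simp
    then show ?thesis unfolding d'_def a_def using adj_int[where i=0 and n=n and x=w and h=h and s=s and t=t' and k=k] n hw by auto
  qed
  have dac: "a \<noteq> c"
  proof
    assume "a = c"
    then have "s = s'" "(x - y) mod ?N = 0" unfolding a_def c_def using N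
      by (auto simp: nat_eq_iff)
    then show False using ac by (simp add: dvd_eq_mod_eq_0)
  qed
  have dbd: "b \<noteq> d'"
  proof
    assume "b = d'"
    then have "t = t'" "x mod ?N = (x - y + z) mod ?N" unfolding b_def d'_def using N
      by (auto simp: eq_nat_nat_iff)
    then have "(x - y + z) mod ?N = x mod ?N" by simp
    then have "?N dvd (x - y + z - x)" by (simp only: mod_eq_dvd_iff)
    then show False using bd \<open>t = t'\<close> by simp
  qed
  have V: "a \<in> arith_V n" "b \<in> arith_V n" "c \<in> arith_V n" "d' \<in> arith_V n"
    unfolding a_def b_def c_def d'_def arith_V_def using N n by (auto simp: nat_less_iff)
  have "distinct [a, b, c, d']" using dac dbd unfolding a_def b_def c_def d'_def by auto
  then show ?thesis unfolding has_4cycle_def using V E1 E2 E3 E4 by blast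
qed




lemma adj_int_rev:
  assumes "arith_adj n h k (False,s,i) (True,t,j)"
  shows "i < n \<and> (\<exists>x. (x = int (h s t) \<or> x = int (k s t)) \<and> int j = (int i + x) mod int n)"
  using assms unfolding adj_AB by (auto simp: zmod_int)

lemma cyc_core:
  assumes e1: "arith_adj n h k (False,s1,i1) (True,t1,j1)"
    and e2: "arith_adj n h k (True,t1,j1) (False,s2,i2)"
    and e3: "arith_adj n h k (False,s2,i2) (True,t2,j2)"
    and e4: "arith_adj n h k (True,t2,j2) (False,s1,i1)"
    and d1: "(False,s1,i1) \<noteq> (False,s2,i2)" and d2: "(True,t1,j1) \<noteq> (True,t2,j2)"
  shows "\<exists>s1 s2 t1 t2 x y z w. (x = int(h s1 t1) \<or> x = int(k s1 t1)) \<and>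
     (y = int(h s2 t1) \<or> y = int(k s2 t1)) \<and> (z = int(h s2 t2) \<or> z = int(k s2 t2)) \<and>
     (w = int(h s1 t2) \<or> w = int(k s1 t2)) \<and> int n dvd (x - y + z - w) \<and>
     \<not> (s1 = s2 \<and> int n dvd (x - y)) \<and> \<not> (t1 = t2 \<and> int n dvd (z - y))"
proof -
  have e2': "arith_adj n h k (False,s2,i2) (True,t1,j1)" using e2 by (simp add: adj_AB adj_BA)
  have e4': "arith_adj n h k (False,s1,i1) (True,t2,j2)" using e4 by (simp add: adj_AB adj_BA)
  obtain x where x: "x = int (h s1 t1) \<or> x = int (k s1 t1)" "int j1 = (int i1 + x) mod int n" and i1: "i1 < n"
    using adj_int_rev[OF e1] by blast
  obtain y where y: "y = int (h s2 t1) \<or> y = int (k s2 t1)" "int j1 = (int i2 + y) mod int n" and i2: "i2 < n"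
    using adj_int_rev[OF e2'] by blast
  obtain z where z: "z = int (h s2 t2) \<or> z = int (k s2 t2)" "int j2 = (int i2 + z) mod int n"
    using adj_int_rev[OF e3] by blast
  obtain w where w: "w = int (h s1 t2) \<or> w = int (k s1 t2)" "int j2 = (int i1 + w) mod int n"
    using adj_int_rev[OF e4'] by blast
  let ?N = "int n"
  have N: "?N > 0" using i1 by simp
  have j1: "int j1 < ?N" "int j2 < ?N" using x(2) z(2) N by simp_all
  have "(int i1 + x) mod ?N = (int i2 + y) mod ?N" using x(2) y(2) by simp
  then have "?N dvd (int i1 + x - (int i2 + y))" by (simp only: mod_eq_dvd_iff)
  then have a1: "?N dvd (int i1 + x - int i2 - y)" by (simp add: algebra_simps)
  have "(int i2 + z) mod ?N = (int i1 + w) mod ?N" using z(2) w(2) by simp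
  then have "?N dvd (int i2 + z - (int i1 + w))" by (simp only: mod_eq_dvd_iff)
  then have a2: "?N dvd (int i2 + z - int i1 - w)" by (simp add: algebra_simps)
  have "?N dvd ((int i1 + x - int i2 - y) + (int i2 + z - int i1 - w))" using a1 a2 by (rule dvd_add)
  then have D: "?N dvd (x - y + z - w)" by (simp add: algebra_simps)
  have S: "\<not> (s1 = s2 \<and> ?N dvd (x - y))"
  proof
    assume H: "s1 = s2 \<and> ?N dvd (x - y)"
    have "?N dvd ((int i1 + x - int i2 - y) - (x - y))" using a1 H dvd_diff by blast
    then have "?N dvd (int i1 - int i2)" by (simp add: algebra_simps)
    then have "int i1 mod ?N = int i2 mod ?N" by (simp add: mod_eq_dvd_iff)
    moreover have "int i1 mod ?N = int i1" "int i2 mod ?N = int i2"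
      using i1 i2 by (simp_all add: mod_pos_pos_trivial)
    ultimately have "i1 = i2" by simp
    then show False using d1 H by blast
  qed
  have T: "\<not> (t1 = t2 \<and> ?N dvd (z - y))"
  proof
    assume H: "t1 = t2 \<and> ?N dvd (z - y)"
    have "int j1 mod ?N = (int i2 + y) mod ?N" "int j2 mod ?N = (int i2 + z) mod ?N"
      using y(2) z(2) by simp_all
    have "?N dvd ((int i2 + z) - (int i2 + y))" using H by simp
    then have "(int i2 + z) mod ?N = (int i2 + y) mod ?N" by (simp only: mod_eq_dvd_iff)
    then have "int j1 = int j2" using y(2) z(2) by (simp only:)
    then show False using d2 H by simp
  qed
  show ?thesis
    apply (rule exI[where x=s1], rule exI[where x=s2], rule exI[where x=t1], rule exI[where x=t2])
    apply (rule exI[where x=x], rule exI[where x=y], rule exI[where x=z], rule exI[where x=w])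
    using x(1) y(1) z(1) w(1) D S T by simp
qed

lemma adj_side:
  assumes "arith_adj n h k u v" shows "fst u \<noteq> fst v"
  using assms by (auto simp: arith_adj_def arith_edge0_def)

lemma cyc_nec:
  assumes "has_4cycle (arith_V n) (arith_adj n h k)"
  shows "\<exists>s1 s2 t1 t2 x y z w. (x = int(h s1 t1) \<or> x = int(k s1 t1)) \<and>
     (y = int(h s2 t1) \<or> y = int(k s2 t1)) \<and> (z = int(h s2 t2) \<or> z = int(k s2 t2)) \<and>
     (w = int(h s1 t2) \<or> w = int(k s1 t2)) \<and> int n dvd (x - y + z - w) \<and>
     \<not> (s1 = s2 \<and> int n dvd (x - y)) \<and> \<not> (t1 = t2 \<and> int n dvd (z - y))"
proof -
  obtain a b c d where dist: "distinct [a,b,c,d]" and E: "arith_adj n h k a b" "arith_adj n h k b c"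
    "arith_adj n h k c d" "arith_adj n h k d a"
    using assms unfolding has_4cycle_def by blast
  obtain pa sa ia where a: "a = (pa,sa,ia)" by (cases a)
  obtain pb sb ib where b: "b = (pb,sb,ib)" by (cases b)
  obtain pc sc ic where c: "c = (pc,sc,ic)" by (cases c)
  obtain pd sd id where d: "d = (pd,sd,id)" by (cases d)
  have sides: "pb = (\<not> pa)" "pc = pa" "pd = (\<not> pa)"
    using adj_side[OF E(1)] adj_side[OF E(2)] adj_side[OF E(3)] a b c d by auto
  show ?thesis
  proof (cases pa)
    case False
    then have v: "a = (False,sa,ia)" "b = (True,sb,ib)" "c = (False,sc,ic)" "d = (True,sd,id)"
      using a b c d sides by simp_all
    show ?thesis
      by (rule cyc_core[of n h k sa ia sb ib sc ic sd id]) (use E dist in \<open>simp_all add: v\<close>)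
  next
    case True
    then have v: "a = (True,sa,ia)" "b = (False,sb,ib)" "c = (True,sc,ic)" "d = (False,sd,id)"
      using a b c d sides by simp_all
    show ?thesis
      apply (rule cyc_core[of n h k sb ib sc ic sd id sa ia])
      using E dist by (simp_all add: v) blast
  qed
qed




lemma part_mem: "u \<in> arith_part n p s \<longleftrightarrow> (\<exists>i. u = (p,s,i) \<and> i < n)"
  by (auto simp: arith_part_def)

lemma adj_sym: "arith_adj n h k u w \<Longrightarrow> arith_adj n h k w u"
  by (auto simp: arith_adj_def)

lemma conn_coprime:
  assumes conn: "induced_connected (arith_adj n h k) (arith_part n False s \<union> arith_part n True t)"
    and n: "2 \<le> n"
  shows "coprime (int (k s t) - int (h s t)) (int n)"
proof -
  define S where "S = arith_part n False s \<union> arith_part n True t"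
  define R where "R = {(u, w). u \<in> S \<and> w \<in> S \<and> arith_adj n h k u w}"
  define H where "H = int (h s t)"
  define K where "K = int (k s t)"
  define g where "g = gcd (K - H) (int n)"
  define P where "P v \<longleftrightarrow> (if fst v then g dvd (int (snd (snd v)) - H) else g dvd int (snd (snd v)))" for v :: avert
  have gn: "g dvd int n" and gd: "g dvd (K - H)" unfolding g_def by simp_all
  have key: "g dvd int i \<longleftrightarrow> g dvd (int j - H)"
    if "int j = (int i + H) mod int n \<or> int j = (int i + K) mod int n" for i j
  proof -
    have "g dvd (int j - H - int i)"
      using that
    proof
      assume a: "int j = (int i + H) mod int n"
      then have "int j mod int n = (int i + H) mod int n" by simp
      then have "int n dvd (int j - (int i + H))" by (simp only: mod_eq_dvd_iff)
      then have "g dvd (int j - (int i + H))" using gn dvd_trans by blast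
      then show ?thesis by (simp add: algebra_simps)
    next
      assume a: "int j = (int i + K) mod int n"
      then have "int j mod int n = (int i + K) mod int n" by simp
      then have "int n dvd (int j - (int i + K))" by (simp only: mod_eq_dvd_iff)
      then have "g dvd (int j - (int i + K))" using gn dvd_trans by blast
      then have "g dvd ((int j - (int i + K)) + (K - H))" using gd dvd_add by blast
      then show ?thesis by (simp add: algebra_simps)
    qed
    then have "g dvd ((int j - H - int i) + int i) \<longleftrightarrow> g dvd int i"
      by (rule dvd_add_right_iff)
    moreover have "(int j - H - int i) + int i = int j - H" by simp
    ultimately show ?thesis by simp
  qed
  have adjint: "int j = (int i + H) mod int n \<or> int j = (int i + K) mod int n"
    if "j = (i + h s t) mod n \<or> j = (i + k s t) mod n" for i j
    using that unfolding H_def K_def by (auto simp: zmod_int)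
  have stepP: "P w" if "(u, w) \<in> R" "P u" for u w
  proof -
    have u: "u \<in> S" and w: "w \<in> S" and e: "arith_adj n h k u w" using that(1) unfolding R_def by auto
    obtain i where ui: "u = (False,s,i) \<and> i < n \<or> u = (True,t,i) \<and> i < n"
      using u unfolding S_def Un_iff part_mem by blast
    obtain j where wj: "w = (False,s,j) \<and> j < n \<or> w = (True,t,j) \<and> j < n"
      using w unfolding S_def Un_iff part_mem by blast
    show ?thesis
    proof (cases "u = (False,s,i)")
      case True
      then have wB: "w = (True,t,j)" using wj e adj_AA by blast
      then have "j = (i + h s t) mod n \<or> j = (i + k s t) mod n" using e True adj_AB by blast
      then have "g dvd int i \<longleftrightarrow> g dvd (int j - H)" using key adjint by blast
      then show ?thesis using that(2) True wB unfolding P_def by simp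
    next
      case False
      then have uB: "u = (True,t,i)" using ui by blast
      then have wA: "w = (False,s,j)" using wj e adj_BB by blast
      then have "i = (j + h s t) mod n \<or> i = (j + k s t) mod n" using e uB adj_BA by blast
      then have "g dvd int j \<longleftrightarrow> g dvd (int i - H)" using key adjint by blast
      then show ?thesis using that(2) uB wA unfolding P_def by simp
    qed
  qed
  have "(False,s,0) \<in> S" "(False,s,1) \<in> S" using n unfolding S_def by (auto simp: part_mem)
  then have "((False,s,0::nat),(False,s,1::nat)) \<in> R\<^sup>*"
    using conn unfolding induced_connected_def S_def[symmetric] R_def by blast
  then have "P (False,s,1)"
  proof (induction rule: rtrancl_induct)
    case base then show ?case unfolding P_def by simp
  next
    case (step y z) then show ?case using stepP by blast
  qed
  then have "g dvd 1" unfolding P_def by simp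
  then show ?thesis unfolding g_def H_def K_def using is_unit_gcd by blast
qed




lemma conn_pos:
  assumes n: "1 \<le> n" and kd: "k s t = h s t + D" and cov: "\<forall>i<n. \<exists>m. (m*D) mod n = i"
  shows "induced_connected (arith_adj n h k) (arith_part n False s \<union> arith_part n True t)"
proof -
  define S where "S = arith_part n False s \<union> arith_part n True t"
  define R where "R = {(u, w). u \<in> S \<and> w \<in> S \<and> arith_adj n h k u w}"
  define a0 where "a0 = (False, s, 0::nat)"
  have Ain: "(False,s,i) \<in> S" if "i < n" for i using that unfolding S_def by (simp add: part_mem)
  have Bin: "(True,t,j) \<in> S" if "j < n" for j using that unfolding S_def by (simp add: part_mem)
  have np: "0 < n" using n by simp
  have stepA: "((False,s,i),(False,s,(i+D) mod n)) \<in> R\<^sup>*" if "i < n" for i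
  proof -
    let ?b = "(True, t, (i + h s t + D) mod n)"
    have e1: "arith_adj n h k (False,s,i) ?b" using that kd by (simp add: adj_AB add.assoc)
    have "((i+D) mod n + h s t) mod n = (i + D + h s t) mod n" by (rule mod_add_left_eq)
    then have "(i + h s t + D) mod n = ((i+D) mod n + h s t) mod n" by (simp add: ac_simps)
    then have e2: "arith_adj n h k ?b (False,s,(i+D) mod n)" using np by (simp add: adj_BA)
    have "((False,s,i), ?b) \<in> R" using e1 Ain Bin that np unfolding R_def by simp
    moreover have "(?b, (False,s,(i+D) mod n)) \<in> R" using e2 Ain Bin np unfolding R_def by simp
    ultimately show ?thesis by auto
  qed
  have reach: "(a0, (False,s,(m*D) mod n)) \<in> R\<^sup>*" for m
  proof (induction m)
    case 0 then show ?case unfolding a0_def by simp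
  next
    case (Suc m)
    have "((False,s,(m*D) mod n),(False,s,((m*D) mod n + D) mod n)) \<in> R\<^sup>*"
      using stepA np by simp
    moreover have "((m*D) mod n + D) mod n = (Suc m * D) mod n"
      by (simp only: mod_add_left_eq) (simp add: add.commute)
    ultimately show ?case using Suc rtrancl_trans by fastforce
  qed
  have allA: "(a0, (False,s,i)) \<in> R\<^sup>*" if "i < n" for i
    using reach cov that by metis
  have allB: "(a0, (True,t,j)) \<in> R\<^sup>*" if "j < n" for j
  proof -
    define i where "i = (j + (n - h s t mod n)) mod n"
    have il: "i < n" using np unfolding i_def by simp
    have "(i + h s t) mod n = (j + (n - h s t mod n) + h s t) mod n"
      unfolding i_def by (simp add: mod_add_left_eq)
    also have "\<dots> = (j + (n - h s t mod n) + h s t mod n) mod n" by (simp add: mod_add_right_eq)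
    also have "\<dots> = (j + n) mod n"
    proof -
      have "h s t mod n \<le> n" using np by (meson mod_less_divisor less_imp_le)
      then have "j + (n - h s t mod n) + h s t mod n = j + n" by linarith
      then show ?thesis by (simp only:)
    qed
    also have "\<dots> = j" using that by simp
    finally have "arith_adj n h k (False,s,i) (True,t,j)" using il by (simp add: adj_AB)
    then have "((False,s,i),(True,t,j)) \<in> R" using Ain Bin il that unfolding R_def by simp
    then show ?thesis using allA[OF il] by auto
  qed
  have all: "(a0, v) \<in> R\<^sup>*" if "v \<in> S" for v
    using that allA allB unfolding S_def by (auto simp: part_mem)
  have "sym R" unfolding R_def sym_def using adj_sym by blast
  then have sR: "sym (R\<^sup>*)" by (rule sym_rtrancl)
  have "(x, y) \<in> R\<^sup>*" if "x \<in> S" "y \<in> S" for x y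
  proof -
    have "(x, a0) \<in> R\<^sup>*" using all[OF that(1)] sR by (meson symD)
    then show ?thesis using all[OF that(2)] by auto
  qed
  moreover have "S \<noteq> {}" using Ain np by blast
  ultimately show ?thesis unfolding induced_connected_def S_def[symmetric] R_def by blast
qed




definition v3 :: "int \<Rightarrow> int \<Rightarrow> int \<Rightarrow> int \<Rightarrow> int \<Rightarrow> bool" where
 "v3 n a b p q \<longleftrightarrow>
   (b \<noteq> 0 \<and> ((a - b) mod n = 0 \<or> (a + b) mod n = 0)) \<or>
   (p \<noteq> 0 \<and> ((q - p) mod n = 0 \<or> (q + p) mod n = 0)) \<or>
   (a \<noteq> 0 \<and> ((a - q) mod n = 0 \<or> (a + q) mod n = 0)) \<or>
   (b \<noteq> 0 \<and> ((b - p) mod n = 0 \<or> (b + p) mod n = 0))"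
definition v4 :: "int \<Rightarrow> int \<Rightarrow> int \<Rightarrow> int \<Rightarrow> int \<Rightarrow> int \<Rightarrow> bool" where
 "v4 n a b p q r \<longleftrightarrow> (\<exists>e1\<in>set [0,1]. \<exists>e2\<in>set [0,1]. \<exists>e3\<in>set [0,1]. \<exists>e4\<in>set [0,1].
     (r + e1*a - e2*b + e3*p - e4*q) mod n = 0)"
definition chk :: "int \<Rightarrow> bool" where
 "chk n \<longleftrightarrow> (let U = filter (\<lambda>x. coprime x n) [0..n-1] in
   \<forall>a\<in>set U. \<forall>b\<in>set U. \<forall>p\<in>set U. \<forall>q\<in>set U. v3 n a b p q \<or> (\<forall>r\<in>set [0..n-1]. v4 n a b p q r))"

lemma chk_all: "chk 1" "chk 2" "chk 3" "chk 4" "chk 5" "chk 6" "chk 7" "chk 8"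
  by code_simp+

lemma dvd3: "(N::int) dvd A \<Longrightarrow> N dvd B \<Longrightarrow> N dvd C \<Longrightarrow> X = u*A + v*B + w*C \<Longrightarrow> N dvd X"
  by (simp add: dvd_add dvd_mult)

lemma dvd6: "(N::int) dvd A1 \<Longrightarrow> N dvd A2 \<Longrightarrow> N dvd A3 \<Longrightarrow> N dvd A4 \<Longrightarrow> N dvd A5 \<Longrightarrow> N dvd A6
  \<Longrightarrow> X = c1*A1 + c2*A2 + c3*A3 + c4*A4 + c5*A5 + c6*A6 \<Longrightarrow> N dvd X"
  by (simp add: dvd_add dvd_mult)

lemma lower:
  assumes sz: "arith_sizeable n h k" and n1: "1 \<le> n" and n8: "n \<le> 8"
  shows False
proof -
  have nc: "\<not> has_4cycle (arith_V n) (arith_adj n h k)"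
    using sz by (simp add: arith_sizeable_def sizeable_def)
  have conn: "induced_connected (arith_adj n h k) (arith_part n False s \<union> arith_part n True t)" for s t
    using sz unfolding arith_sizeable_def sizeable_def by (cases s; cases t) auto
  define N where "N = int n"
  define H where "H s t = int (h s t)" for s t
  define K where "K s t = int (k s t)" for s t
  define Dl where "Dl s t = K s t - H s t" for s t
  have N0: "N > 0" using n1 unfolding N_def by simp
  have n0: "0 < n" using n1 by simp
  have cop: "coprime (Dl s t mod N) N" for s t
  proof (cases "n = 1")
    case True then show ?thesis unfolding N_def by simp
  next
    case False
    then have "coprime (Dl s t) N" using conn_coprime[OF conn] n1 unfolding Dl_def H_def K_def N_def by simp
    then show ?thesis using N0 by simp
  qed
  define a where "a = Dl False False mod N"
  define b where "b = Dl True False mod N"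
  define p where "p = Dl True True mod N"
  define q where "q = Dl False True mod N"
  define c where "c = H False False - H True False + H True True - H False True"
  define r where "r = c mod N"
  have chkN: "chk N"
  proof -
    have "n = 1 \<or> n = 2 \<or> n = 3 \<or> n = 4 \<or> n = 5 \<or> n = 6 \<or> n = 7 \<or> n = 8" using n1 n8 by linarith
    then show ?thesis unfolding N_def using chk_all by auto
  qed
  have inU: "x mod N \<in> set (filter (\<lambda>x. coprime x N) [0..N-1])" if "coprime (x mod N) N" for x
    using that N0 by (simp add: pos_mod_bound less_le_trans) 
  have rin: "r \<in> set [0..N-1]" unfolding r_def using N0 by simp
  have "v3 N a b p q \<or> v4 N a b p q r"
    using chkN inU[OF cop] rin unfolding chk_def Let_def a_def b_def p_def q_def by blast
  have md: "N dvd (x mod N - x)" for x by (metis mod_eq_dvd_iff mod_mod_trivial)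
  have ha: "N dvd (a - Dl False False)" and hb: "N dvd (b - Dl True False)"
    and hp: "N dvd (p - Dl True True)" and hq: "N dvd (q - Dl False True)"
    and hr: "N dvd (r - c)"
    unfolding a_def b_def p_def q_def r_def using md by blast+
  have nz: "\<not> N dvd Dl s t" if "Dl s t mod N \<noteq> 0" for s t using that by (simp add: dvd_eq_mod_eq_0)
  have hx: "H s t = int (h s t)" "H s t + Dl s t = int (k s t)" "K s t = int (k s t)" for s t
    unfolding H_def K_def Dl_def by simp_all
  have cyc: "has_4cycle (arith_V n) (arith_adj n h k)"
    if "x = H s t \<or> x = K s t" "y = H s' t \<or> y = K s' t" "z = H s' t' \<or> z = K s' t'"
       "w = H s t' \<or> w = K s t'" "N dvd (x - y + z - w)"
       "s \<noteq> s' \<or> \<not> N dvd (x - y)" "t \<noteq> t' \<or> \<not> N dvd (z - y)" for x y z w s s' t t'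
    by (rule cyc_suff[OF n0, of x h s t k y s' z t' w]) (use that in \<open>simp_all add: H_def K_def N_def\<close>)
  show False
  proof -
    have "has_4cycle (arith_V n) (arith_adj n h k)"
      using \<open>v3 N a b p q \<or> v4 N a b p q r\<close>
    proof
      assume "v3 N a b p q"
      then consider
          "b \<noteq> 0" "N dvd (a - b)" | "b \<noteq> 0" "N dvd (a + b)"
        | "p \<noteq> 0" "N dvd (q - p)" | "p \<noteq> 0" "N dvd (q + p)"
        | "a \<noteq> 0" "N dvd (a - q)" | "a \<noteq> 0" "N dvd (a + q)"
        | "b \<noteq> 0" "N dvd (b - p)" | "b \<noteq> 0" "N dvd (b + p)"
        unfolding v3_def dvd_eq_mod_eq_0 by argo
      then show ?thesis
      proof cases
        case 1
        show ?thesis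
          apply (rule cyc[of "H False False" False False "H True False" True "K True False" False "K False False"])
          apply simp_all
          using dvd3[OF ha hb 1(2), of _ 1 "-1" "-1"] apply (simp add: Dl_def algebra_simps)
          using nz[of True False] 1(1) unfolding b_def Dl_def by simp
      next
        case 2
        show ?thesis
          apply (rule cyc[of "H False False" False False "K True False" True "H True False" False "K False False"])
          apply simp_all
          using dvd3[OF ha hb 2(2), of _ 1 1 "-1"] apply (simp add: Dl_def algebra_simps)
          using nz[of True False] 2(1) unfolding b_def Dl_def by (simp add: dvd_diff_commute)
      next
        case 3
        show ?thesis
          apply (rule cyc[of "H False True" False True "H True True" True "K True True" True "K False True"])
          apply simp_all
          using dvd3[OF hq hp 3(2), of _ 1 "-1" "-1"] apply (simp add: Dl_def algebra_simps)
          using nz[of True True] 3(1) unfolding p_def Dl_def by simp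
      next
        case 4
        show ?thesis
          apply (rule cyc[of "H False True" False True "K True True" True "H True True" True "K False True"])
          apply simp_all
          using dvd3[OF hq hp 4(2), of _ 1 1 "-1"] apply (simp add: Dl_def algebra_simps)
          using nz[of True True] 4(1) unfolding p_def Dl_def by (simp add: dvd_diff_commute)
      next
        case 5
        show ?thesis
          apply (rule cyc[of "K False False" False False "H False False" False "H False True" True "K False True"])
          apply simp_all
          using dvd3[OF ha hq 5(2), of _ "-1" 1 1] apply (simp add: Dl_def algebra_simps)
          using nz[of False False] 5(1) unfolding a_def Dl_def by simp
      next
        case 6
        show ?thesis
          apply (rule cyc[of "K False False" False False "H False False" False "K False True" True "H False True"])
          apply simp_all
          using dvd3[OF ha hq 6(2), of _ "-1" "-1" 1] apply (simp add: Dl_def algebra_simps)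
          using nz[of False False] 6(1) unfolding a_def Dl_def by simp
      next
        case 7
        show ?thesis
          apply (rule cyc[of "K True False" True False "H True False" True "H True True" True "K True True"])
          apply simp_all
          using dvd3[OF hb hp 7(2), of _ "-1" 1 1] apply (simp add: Dl_def algebra_simps)
          using nz[of True False] 7(1) unfolding b_def Dl_def by simp
      next
        case 8
        show ?thesis
          apply (rule cyc[of "K True False" True False "H True False" True "K True True" True "H True True"])
          apply simp_all
          using dvd3[OF hb hp 8(2), of _ "-1" "-1" 1] apply (simp add: Dl_def algebra_simps)
          using nz[of True False] 8(1) unfolding b_def Dl_def by simp
      qed
    next
      assume "v4 N a b p q r"
      then obtain e1 e2 e3 e4 where e': "e1 \<in> set [0,1]" "e2 \<in> set [0,1]" "e3 \<in> set [0,1]" "e4 \<in> set [0,1]"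
        and S': "(r + e1*a - e2*b + e3*p - e4*q) mod N = 0"
        unfolding v4_def by (elim bexE) (rule that)
      have e: "e1 = 0 \<or> e1 = 1" "e2 = 0 \<or> e2 = 1" "e3 = 0 \<or> e3 = 1" "e4 = 0 \<or> e4 = 1"
        using e' by simp_all
      have S: "N dvd (r + e1*a - e2*b + e3*p - e4*q)" using S' by (simp only: dvd_eq_mod_eq_0)
      have xs: "H s t + e * Dl s t = H s t \<or> H s t + e * Dl s t = K s t" if "e = 0 \<or> e = 1" for e s t
        using that unfolding Dl_def by auto
      have x1: "H False False + e1 * Dl False False = H False False \<or> H False False + e1 * Dl False False = K False False"
        by (rule xs[OF e(1)])
      have x2: "H True False + e2 * Dl True False = H True False \<or> H True False + e2 * Dl True False = K True False"
        by (rule xs[OF e(2)])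
      have x3: "H True True + e3 * Dl True True = H True True \<or> H True True + e3 * Dl True True = K True True"
        by (rule xs[OF e(3)])
      have x4: "H False True + e4 * Dl False True = H False True \<or> H False True + e4 * Dl False True = K False True"
        by (rule xs[OF e(4)])
      have eq: "(H False False + e1 * Dl False False) - (H True False + e2 * Dl True False)
          + (H True True + e3 * Dl True True) - (H False True + e4 * Dl False True)
        = 1 * (r + e1*a - e2*b + e3*p - e4*q) + (-1) * (r - c) + (-e1) * (a - Dl False False)
          + e2 * (b - Dl True False) + (-e3) * (p - Dl True True) + e4 * (q - Dl False True)"
        unfolding c_def by (simp add: algebra_simps)
      have d: "N dvd ((H False False + e1 * Dl False False) - (H True False + e2 * Dl True False)
          + (H True True + e3 * Dl True True) - (H False True + e4 * Dl False True))"
        by (rule dvd6[OF S hr ha hb hp hq eq])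
      show ?thesis
        by (rule cyc[OF x1 x2 x3 x4 d]) simp_all
    qed
    then show False using nc by simp
  qed
qed




definition h9 :: "bool \<Rightarrow> bool \<Rightarrow> nat" where
  "h9 s t = (if s then 0 else (if t then 0 else 5))"
definition k9 :: "bool \<Rightarrow> bool \<Rightarrow> nat" where
  "k9 s t = (if s then (if t then 1 else 2) else (if t then 2 else 6))"

lemma simple_arith: "simple_graph (arith_V n) (arith_adj n h k)"
  unfolding simple_graph_def arith_adj_def arith_edge0_def arith_V_def by auto

lemma bip_arith: "bipartite_on (arith_V n) (arith_adj n h k)
   (arith_part n False False \<union> arith_part n False True) (arith_part n True False \<union> arith_part n True True)"
  unfolding bipartite_on_def arith_adj_def arith_edge0_def arith_V_def arith_part_def
  by auto

definition no4chk :: "int \<Rightarrow> (bool \<Rightarrow> bool \<Rightarrow> nat) \<Rightarrow> (bool \<Rightarrow> bool \<Rightarrow> nat) \<Rightarrow> bool" where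
  "no4chk N h k \<longleftrightarrow> (\<forall>s1\<in>set [True,False]. \<forall>s2\<in>set [True,False]. \<forall>t1\<in>set [True,False]. \<forall>t2\<in>set [True,False].
     \<forall>x\<in>set [int (h s1 t1), int (k s1 t1)]. \<forall>y\<in>set [int (h s2 t1), int (k s2 t1)].
     \<forall>z\<in>set [int (h s2 t2), int (k s2 t2)]. \<forall>w\<in>set [int (h s1 t2), int (k s1 t2)].
     (x - y + z - w) mod N \<noteq> 0 \<or> (s1 = s2 \<and> (x - y) mod N = 0) \<or> (t1 = t2 \<and> (z - y) mod N = 0))"

lemma no4chk_9: "no4chk 9 h9 k9"
  unfolding h9_def k9_def by code_simp

lemma no4chk_sound:
  assumes "no4chk (int n) h k" shows "\<not> has_4cycle (arith_V n) (arith_adj n h k)"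
proof
  assume "has_4cycle (arith_V n) (arith_adj n h k)"
  from cyc_nec[OF this] obtain s1 s2 t1 t2 x y z w where
    hx: "x = int(h s1 t1) \<or> x = int(k s1 t1)" and hy: "y = int(h s2 t1) \<or> y = int(k s2 t1)"
    and hz: "z = int(h s2 t2) \<or> z = int(k s2 t2)" and hw: "w = int(h s1 t2) \<or> w = int(k s1 t2)"
    and d: "int n dvd (x - y + z - w)" and S: "\<not> (s1 = s2 \<and> int n dvd (x - y))"
    and T: "\<not> (t1 = t2 \<and> int n dvd (z - y))"
    by blast
  have m: "s1 \<in> set [True,False]" "s2 \<in> set [True,False]" "t1 \<in> set [True,False]" "t2 \<in> set [True,False]"
    "x \<in> set [int (h s1 t1), int (k s1 t1)]" "y \<in> set [int (h s2 t1), int (k s2 t1)]"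
    "z \<in> set [int (h s2 t2), int (k s2 t2)]" "w \<in> set [int (h s1 t2), int (k s1 t2)]"
    using hx hy hz hw by auto
  have "(x - y + z - w) mod int n \<noteq> 0 \<or> (s1 = s2 \<and> (x - y) mod int n = 0) \<or> (t1 = t2 \<and> (z - y) mod int n = 0)"
    by (rule assms[unfolded no4chk_def, rule_format, OF m(1) m(2) m(3) m(4) m(5) m(6) m(7) m(8)])
  then show False using d S T unfolding dvd_eq_mod_eq_0 by argo
qed

lemma no4_9: "\<not> has_4cycle (arith_V 9) (arith_adj 9 h9 k9)"
  using no4chk_sound[of 9 h9 k9] no4chk_9 by simp

lemma cov1: "\<forall>i<(9::nat). \<exists>m. (m*1) mod 9 = i"
proof (intro allI impI)
  fix i :: nat assume "i < 9"
  then have "(i*1) mod 9 = i" by simp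
  then show "\<exists>m. (m*1) mod 9 = i" by blast
qed
lemma cov2: "\<forall>i<(9::nat). \<exists>m. (m*2) mod 9 = i"
proof (intro allI impI)
  fix i :: nat assume i: "i < 9"
  have "5*i*2 = i + i*9" by simp
  then have "(5*i*2) mod 9 = (i + i*9) mod 9" by simp
  also have "\<dots> = i mod 9" by (rule mod_mult_self1)
  also have "\<dots> = i" using i by simp
  finally show "\<exists>m. (m*2) mod 9 = i" by blast
qed

lemma upper: "arith_sizeable 9 h9 k9"
proof -
  have c: "induced_connected (arith_adj 9 h9 k9) (arith_part 9 False s \<union> arith_part 9 True t)" for s t
  proof (cases s; cases t)
    assume "s" "t" then show ?thesis using conn_pos[of 9 k9 s t h9 1] cov1 by (simp add: h9_def k9_def)
  next
    assume "s" "\<not>t" then show ?thesis using conn_pos[of 9 k9 s t h9 2] cov2 by (simp add: h9_def k9_def)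
  next
    assume "\<not>s" "t" then show ?thesis using conn_pos[of 9 k9 s t h9 2] cov2 by (simp add: h9_def k9_def)
  next
    assume "\<not>s" "\<not>t" then show ?thesis using conn_pos[of 9 k9 s t h9 1] cov1 by (simp add: h9_def k9_def)
  qed
  show ?thesis
    unfolding arith_sizeable_def sizeable_def
    using simple_arith bip_arith no4_9 c by (auto simp: arith_part_def)
qed

theorem mainTheorem12:
  shows "(\<exists>h k. arith_sizeable 9 h k) \<and>
         (\<forall>n h k. 1 \<le> n \<and> n \<le> 8 \<longrightarrow> \<not> arith_sizeable n h k)"
  using upper lower by blast


end
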